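(* Let $\mathcal{O}_d$ be the space of entire functions $f$ such that $|f(x)e^{mx}|\to0$ as $x\to-\infty$ for some $m<1$, and for such $f$ define \[ (\mathfrak{N}f)(x)=\frac{e^{-i\pi x}}{2i\sin(\pi x)\,\Gamma(-x)}\int_{-\infty}^{(0+)}f(s)\,e^{s}(-s)^{-x-1}\,ds . \] Then $\mathfrak{N}$ is $\mathbb{C}$-linear and, for every $f\in\mathcal{O}_d$, \[ \mathfrak{N}(f')(x)=(\mathfrak{N}f)(x+1)-(\mathfrak{N}f)(x),\qquad \mathfrak{N}(sf)(x)=x\,(\mathfrak{N}f)(x-1), \] i.e. $\mathfrak{N}$ is left linear over the Weyl algebra $\mathbb{C}\langle X,\partial\rangle$ when the source carries the action $\partial f=f'$, $Xf(x)=xf(x)$ and the target carries the action $\partial g(x)=g(x+1)-g(x)$, $Xg(x)=xg(x-1)$.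
   Context: The integral $\int_{-\infty}^{(0+)}$ is over a Hankel contour starting at $-\infty$ below the negative real axis, circling the origin counterclockwise, and returning to $-\infty$ above the negative real axis, with the branch of $(-s)^{-x-1}$ determined by $|\arg(-s)|<\pi$ (principal branch) on the contour. *)

theory Defs
  imports "HOL-Complex_Analysis.Complex_Analysis"
begin

definition O_d :: "(complex \<Rightarrow> complex) set" where
  "O_d = {f. f holomorphic_on UNIV \<and>
         (\<exists>m::real. m < 1 \<and>
            ((\<lambda>x::real. norm (f (of_real x) * exp (of_real (m * x)))) \<longlongrightarrow> 0) at_bot)}"

text \<open>Hankel contour integral of g(s) (-s)^a over the contour: from -infinity to -1
  below the negative real axis, the unit circle counterclockwise from arg s = -pi to
  arg s = pi, and back from -1 to -infinity above the negative real axis.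
  The branch of (-s)^a is the principal one at the start of the contour (arg(-s) = 0 on
  the lower ray) continued continuously along the contour: on the circle
  (-s)^a = exp(i pi a) s^a (principal s^a), on the upper ray (-s)^a = exp(2 pi i a) |s|^a.\<close>
definition hankel_integral :: "(complex \<Rightarrow> complex) \<Rightarrow> complex \<Rightarrow> complex" where
  "hankel_integral g a =
     Lim at_top (\<lambda>R::real. contour_integral (linepath (- of_real R) (-1))
                               (\<lambda>s. g s * (-s) powr a))
   + contour_integral (part_circlepath 0 1 (-pi) pi)
                               (\<lambda>s. g s * (exp (\<i> * of_real pi * a) * s powr a))
   + Lim at_top (\<lambda>R::real. contour_integral (linepath (-1) (- of_real R))
                               (\<lambda>s. g s * (exp (2 * \<i> * of_real pi * a) * (-s) powr a)))"

definition frakN :: "(complex \<Rightarrow> complex) \<Rightarrow> complex \<Rightarrow> complex" where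
  "frakN f x = exp (- \<i> * of_real pi * x) / (2 * \<i> * sin (of_real pi * x) * Gamma (- x))
               * hankel_integral (\<lambda>s. f s * exp s) (- x - 1)"

end

theory Submission
  imports Defs "HOL-Real_Asymp.Real_Asymp"
begin

definition Lr :: "(complex \<Rightarrow> complex) \<Rightarrow> complex \<Rightarrow> real \<Rightarrow> complex" where
  "Lr G a R = integral {1..R} (\<lambda>y. G (- of_real y) * of_real y powr a)"

lemma conv_ray:
  assumes G: "continuous_on UNIV G" and c: "c > 0"
    and lim: "((\<lambda>R. norm (G (- of_real R)) * exp (c*R)) \<longlongrightarrow> 0) at_top"
  shows "\<exists>l. (Lr G a \<longlongrightarrow> l) at_top"
proof -
  define H where "H y = G (- of_real y) * of_real y powr a" for y::real
  have contG: "continuous_on A (\<lambda>y::real. G (- of_real y))" for A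
    by (rule continuous_on_compose2[OF G]) (auto intro!: continuous_intros)
  have contH: "continuous_on {1..} H"
    unfolding H_def
    by (intro continuous_intros contG) auto
  have normH: "norm (H y) = norm (G (-of_real y)) * y powr Re a" if "y \<ge> 1" for y
    using that unfolding H_def by (simp add: norm_mult norm_powr_real_powr)
  have lim2: "((\<lambda>y. norm (H y) * exp ((c/2)*y)) \<longlongrightarrow> 0) at_top"
  proof -
    have "((\<lambda>y. (norm (G (- of_real y)) * exp (c*y)) * (y powr Re a * exp (-(c/2)*y))) \<longlongrightarrow> 0) at_top"
      by (rule tendsto_mult_zero[OF lim]) (use c in real_asymp)
    moreover have "eventually (\<lambda>y. (norm (G (- of_real y)) * exp (c*y)) * (y powr Re a * exp (-(c/2)*y))
        = norm (H y) * exp ((c/2)*y)) at_top"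
      using eventually_ge_at_top[of 1]
    proof eventually_elim
      case (elim y)
      have "exp (c*y) * exp (-(c/2)*y) = exp ((c/2)*y)"
        by (simp flip: exp_add)
      then show ?case using normH[OF elim] by (metis mult.assoc mult.left_commute)
    qed
    ultimately show ?thesis by (rule Lim_transform_eventually)
  qed
  obtain K where K: "\<And>y. y \<ge> 1 \<Longrightarrow> norm (H y) \<le> K * exp (-(c/2)*y)"
  proof -
    from order_tendstoD(2)[OF lim2, of 1]
    obtain Y where Y: "\<And>y. y \<ge> Y \<Longrightarrow> norm (H y) * exp ((c/2)*y) < 1"
      by (auto simp: eventually_at_top_linorder)
    have "continuous_on {1..max 1 Y} (\<lambda>y. norm (H y) * exp ((c/2)*y))"
      by (intro continuous_intros continuous_on_subset[OF contH]) auto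
    then have "bounded ((\<lambda>y. norm (H y) * exp ((c/2)*y)) ` {1..max 1 Y})"
      by (intro compact_imp_bounded compact_continuous_image) auto
    then obtain B where B0: "\<forall>z\<in>(\<lambda>y. norm (H y) * exp ((c/2)*y)) ` {1..max 1 Y}. norm z \<le> B"
      unfolding bounded_iff by blast
    have B: "norm (norm (H y) * exp ((c/2)*y)) \<le> B" if "y \<in> {1..max 1 Y}" for y
      using B0 that by blast
    have "norm (H y) \<le> max 1 B * exp (-(c/2)*y)" if "y \<ge> 1" for y
    proof -
      have "norm (H y) * exp ((c/2)*y) \<le> max 1 B"
      proof (cases "y \<le> max 1 Y")
        case True
        then show ?thesis using B[of y] that by auto
      next
        case False
        then have "y \<ge> Y" by linarith
        then show ?thesis using Y[of y] by linarith
      qed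
      then have "norm (H y) * exp ((c/2)*y) * exp (-(c/2)*y) \<le> max 1 B * exp (-(c/2)*y)"
        by (intro mult_right_mono) auto
      then show ?thesis by (simp add: mult.assoc flip: exp_add)
    qed
    then show ?thesis using that by blast
  qed
  have absint: "H absolutely_integrable_on {1..}"
  proof (rule measurable_bounded_by_integrable_imp_absolutely_integrable)
    show "H \<in> borel_measurable (lebesgue_on {1..})"
      by (rule continuous_imp_measurable_on_sets_lebesgue[OF contH]) auto
    show "(\<lambda>y. K * exp (-(c/2)*y)) integrable_on {1..}"
      using integrable_on_exp_minus_to_infinity[of "c/2" 1] c
      using integrable_on_mult_right[of "\<lambda>x. exp (- (c / 2) * x)" "{1..}" K] by auto
  qed (use K in auto)
  have "((\<lambda>b. LINT y:{1..b}|lebesgue. H y) \<longlongrightarrow> (LINT y:{1..}|lebesgue. H y)) at_top"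
    by (rule tendsto_set_lebesgue_integral_at_top[OF _ absint]) auto
  moreover have "(\<lambda>b. LINT y:{1..b}|lebesgue. H y) = Lr G a"
  proof
    fix b
    have "set_integrable lebesgue {1..b} H"
      by (rule set_integrable_subset[OF absint]) auto
    then show "(LINT y:{1..b}|lebesgue. H y) = Lr G a b"
      unfolding Lr_def H_def[abs_def] by (rule set_lebesgue_integral_eq_integral(2))
  qed
  ultimately show ?thesis by auto
qed

lemma contR: fixes F :: "complex \<Rightarrow> complex" shows "continuous_on UNIV F \<Longrightarrow> continuous_on {1..R} (\<lambda>y. F (- of_real y) * of_real y powr a)"
proof -
  assume F: "continuous_on UNIV F"
  have "continuous_on {1..R} (\<lambda>y. F (- of_real y))"
    by (rule continuous_on_compose2[OF F]) (auto intro!: continuous_intros)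
  then show ?thesis by (intro continuous_intros) auto
qed

lemma Lr_has_integral:
  assumes "continuous_on UNIV F"
  shows "((\<lambda>y. F (- of_real y) * of_real y powr a) has_integral Lr F a R) {1..R}"
  unfolding Lr_def using contR[OF assms] by (intro integrable_integral integrable_continuous_real)

lemma ray_lower:
  assumes "continuous_on UNIV F" "R > 1"
  shows "contour_integral (linepath (- of_real R) (-1)) (\<lambda>s. F s * (-s) powr a) = Lr F a R"
proof -
  have "((\<lambda>x. (\<lambda>y. F (- of_real y) * of_real y powr a) (-x)) has_integral Lr F a R) {-R..-1}"
    using Lr_has_integral[OF assms(1)] by (subst has_integral_reflect_real) 
  then have "((\<lambda>x. F (of_real x) * (- of_real x) powr a) has_integral Lr F a R) {Re (- of_real R)..Re (-1)}"
    by simp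
  then have "((\<lambda>s. F s * (-s) powr a) has_contour_integral Lr F a R) (linepath (- of_real R) (-1))"
    using assms by (subst has_contour_integral_linepath_Reals_iff) auto
  then show ?thesis by (rule contour_integral_unique)
qed

lemma ray_upper:
  assumes "continuous_on UNIV F" "R > 1"
  shows "contour_integral (linepath (-1) (- of_real R)) (\<lambda>s. F s * (E * (-s) powr a)) = - E * Lr F a R"
proof -
  have "((\<lambda>x. (\<lambda>y. F (- of_real y) * of_real y powr a) (-x)) has_integral Lr F a R) {-R..-1}"
    using Lr_has_integral[OF assms(1)] by (subst has_integral_reflect_real) 
  then have "((\<lambda>x. F (of_real x) * (- of_real x) powr a) has_integral Lr F a R) {Re (- of_real R)..Re (-1)}"
    by simp
  then have "((\<lambda>s. F s * (-s) powr a) has_contour_integral Lr F a R) (linepath (- of_real R) (-1))"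
    using assms by (subst has_contour_integral_linepath_Reals_iff) auto
  then have "((\<lambda>s. E * (F s * (-s) powr a)) has_contour_integral E * Lr F a R) (linepath (- of_real R) (-1))"
    by (rule has_contour_integral_lmul)
  then have "((\<lambda>s. E * (F s * (-s) powr a)) has_contour_integral - (E * Lr F a R)) (reversepath (linepath (- of_real R) (-1)))"
    by (intro has_contour_integral_reversepath) auto
  then have "((\<lambda>s. F s * (E * (-s) powr a)) has_contour_integral - E * Lr F a R) (linepath (-1) (- of_real R))"
    by (simp add: mult_ac)
  then show ?thesis by (rule contour_integral_unique)
qed

lemma Lr_ibp:
  assumes G: "G holomorphic_on UNIV" and R: "R \<ge> 1"
  shows "Lr (deriv G) a R = G (-1) - G (- of_real R) * of_real R powr a + a * Lr G (a-1) R"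
proof -
  have dG: "(G has_field_derivative deriv G z) (at z)" for z
    using G by (auto intro: holomorphic_derivI)
  have cG: "continuous_on UNIV G" using G holomorphic_on_imp_continuous_on by blast
  have cdG: "continuous_on UNIV (deriv G)" using G holomorphic_deriv holomorphic_on_imp_continuous_on by blast
  have der: "((\<lambda>y. G (- of_real y) * of_real y powr a) has_vector_derivative
      (- (deriv G (- of_real y) * of_real y powr a) + a * (G (- of_real y) * of_real y powr (a-1))))
      (at y within {1..R})" if "y \<in> {1..R}" for y
  proof -
    have nz: "(of_real y :: complex) \<notin> \<real>\<^sub>\<le>\<^sub>0" using that by (auto simp: complex_nonpos_Reals_iff)
    have d1: "((\<lambda>z. G (-z)) has_field_derivative deriv G (- of_real y) * (-1)) (at (of_real y))"
      using DERIV_chain2[OF dG[of "- of_real y"] DERIV_minus[OF DERIV_ident]] by simp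
    have "((\<lambda>z. G (-z) * z powr a) has_field_derivative
       (- (deriv G (- of_real y) * of_real y powr a) + a * (G (- of_real y) * of_real y powr (a-1)))) (at (of_real y))"
      by (rule DERIV_cong[OF DERIV_mult[OF d1 has_field_derivative_powr[OF nz]]]) (simp add: algebra_simps)
    from has_vector_derivative_real_field[OF this] show ?thesis .
  qed
  have h1: "((\<lambda>y. - (deriv G (- of_real y) * of_real y powr a) + a * (G (- of_real y) * of_real y powr (a-1)))
     has_integral (G (- of_real R) * of_real R powr a - G (- of_real 1) * of_real 1 powr a)) {1..R}"
    by (rule fundamental_theorem_of_calculus[OF R der])
  have h2: "((\<lambda>y. - (deriv G (- of_real y) * of_real y powr a) + a * (G (- of_real y) * of_real y powr (a-1)))
     has_integral (- Lr (deriv G) a R + a * Lr G (a-1) R)) {1..R}"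
    by (intro has_integral_add has_integral_neg has_integral_mult_right Lr_has_integral cG cdG)
  have "- Lr (deriv G) a R + a * Lr G (a-1) R = G (- of_real R) * of_real R powr a - G (- of_real 1) * of_real 1 powr a"
    using has_integral_unique[OF h2 h1] .
  then have "- Lr (deriv G) a R + a * Lr G (a-1) R = G (- of_real R) * of_real R powr a - G (-1)"
    by simp
  then show ?thesis by (simp add: algebra_simps)
qed

definition Cp :: "(complex \<Rightarrow> complex) \<Rightarrow> complex \<Rightarrow> real \<Rightarrow> complex" where
  "Cp G a t = G (exp (\<i> * of_real t)) * exp (\<i> * a * (of_real t + of_real pi)) * \<i> * exp (\<i> * of_real t)"

definition Cc :: "(complex \<Rightarrow> complex) \<Rightarrow> complex \<Rightarrow> complex" where
  "Cc G a = integral {-pi..pi} (Cp G a)"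

lemma Cp_cont:
  fixes G :: "complex \<Rightarrow> complex"
  assumes "continuous_on UNIV G" shows "continuous_on A (Cp G a)"
proof -
  have "continuous_on A (\<lambda>t. G (exp (\<i> * of_real t)))"
    by (rule continuous_on_compose2[OF assms]) (auto intro!: continuous_intros)
  then show ?thesis unfolding Cp_def[abs_def] by (intro continuous_intros)
qed

lemma Cp_has_integral:
  assumes "continuous_on UNIV G" shows "(Cp G a has_integral Cc G a) {-pi..pi}"
  unfolding Cc_def using Cp_cont[OF assms] by (intro integrable_integral integrable_continuous_real)

lemma circ_eq:
  assumes "continuous_on UNIV G"
  shows "contour_integral (part_circlepath 0 1 (-pi) pi) (\<lambda>s. G s * (exp (\<i> * of_real pi * a) * s powr a)) = Cc G a"
proof -
  have "contour_integral (part_circlepath 0 1 (-pi) pi) (\<lambda>s. G s * (exp (\<i> * of_real pi * a) * s powr a))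
     = integral {-pi..pi} (\<lambda>t. G (cis t) * (exp (\<i> * of_real pi * a) * (cis t) powr a) * \<i> * cis t)"
    using contour_integral_part_circlepath_eq[of "-pi" pi 0 1 "\<lambda>s. G s * (exp (\<i> * of_real pi * a) * s powr a)"] by simp
  also have "\<dots> = Cc G a"
    unfolding Cc_def
  proof (rule integral_spike[of "{-pi}"])
    fix t assume t: "t \<in> {-pi..pi} - {-pi}"
    then have t1: "- pi < t" "t \<le> pi" by auto
    have "Ln (exp (\<i> * of_real t)) = \<i> * of_real t"
      using t1 by (intro Ln_exp) auto
    then have "cis t powr a = exp (a * (\<i> * of_real t))"
      by (simp add: powr_def cis_conv_exp)
    then have "exp (\<i> * of_real pi * a) * cis t powr a = exp (\<i> * a * (of_real t + of_real pi))"
      by (simp add: algebra_simps flip: exp_add)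
    then show "Cp G a t = G (cis t) * (exp (\<i> * of_real pi * a) * (cis t) powr a) * \<i> * cis t"
      unfolding Cp_def by (simp add: cis_conv_exp)
  qed simp
  finally show ?thesis .
qed

lemma exp_shift_m1: "exp (\<i> * (a - 1) * (of_real t + of_real pi)) * exp (\<i> * of_real t) = - exp (\<i> * a * (of_real t + of_real pi))"
proof -
  have "exp (\<i> * (a - 1) * (of_real t + of_real pi)) * exp (\<i> * of_real t)
      = exp (\<i> * a * (of_real t + of_real pi)) * exp (- (\<i> * of_real pi))"
    by (simp add: algebra_simps flip: exp_add)
  also have "exp (- (\<i> * of_real pi)) = -1"
    by (simp add: exp_minus)
  finally show ?thesis by simp
qed

lemma exp_shift_p1: "exp (\<i> * (a + 1) * (of_real t + of_real pi)) = - (exp (\<i> * a * (of_real t + of_real pi)) * exp (\<i> * of_real t))"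
proof -
  have e: "\<i> * (a + 1) * (of_real t + of_real pi) = (\<i> * a * (of_real t + of_real pi) + \<i> * of_real t) + \<i> * of_real pi"
    by (simp add: algebra_simps)
  have "exp (\<i> * (a + 1) * (of_real t + of_real pi))
      = exp (\<i> * a * (of_real t + of_real pi)) * exp (\<i> * of_real t) * exp (\<i> * of_real pi)"
    unfolding e by (simp only: exp_add)
  then show ?thesis by simp
qed

lemma circ_ibp:
  assumes G: "G holomorphic_on UNIV"
  shows "Cc (deriv G) a = G (-1) * (exp (2 * \<i> * of_real pi * a) - 1) + a * Cc G (a-1)"
proof -
  have dG: "(G has_field_derivative deriv G z) (at z)" for z
    using G by (auto intro: holomorphic_derivI)
  have cG: "continuous_on UNIV G" using G holomorphic_on_imp_continuous_on by blast
  have cdG: "continuous_on UNIV (deriv G)" using G holomorphic_deriv holomorphic_on_imp_continuous_on by blast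
  define K where "K z = G (exp (\<i> * z)) * exp (\<i> * a * (z + of_real pi))" for z
  have der: "((\<lambda>t. K (of_real t)) has_vector_derivative (Cp (deriv G) a t - a * Cp G (a-1) t)) (at t within {-pi..pi})" for t
  proof -
    have d1: "((\<lambda>z. G (exp (\<i> * z))) has_field_derivative deriv G (exp (\<i> * of_real t)) * (exp (\<i> * of_real t) * \<i>)) (at (of_real t))"
      by (rule DERIV_chain2[OF dG]) (auto intro!: derivative_eq_intros)
    have d2: "((\<lambda>z. exp (\<i> * a * (z + of_real pi))) has_field_derivative exp (\<i> * a * (of_real t + of_real pi)) * (\<i> * a)) (at (of_real t))"
      by (auto intro!: derivative_eq_intros)
    have "(K has_field_derivative (Cp (deriv G) a t - a * Cp G (a-1) t)) (at (of_real t))"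
      unfolding K_def
    proof (rule DERIV_cong[OF DERIV_mult[OF d1 d2]])
      have "a * Cp G (a-1) t = a * G (exp (\<i> * of_real t)) * \<i> * (exp (\<i> * (a - 1) * (of_real t + of_real pi)) * exp (\<i> * of_real t))"
        unfolding Cp_def by (simp add: algebra_simps)
      also have "\<dots> = - (a * G (exp (\<i> * of_real t)) * \<i> * exp (\<i> * a * (of_real t + of_real pi)))"
        by (simp add: exp_shift_m1)
      finally show "deriv G (exp (\<i> * of_real t)) * (exp (\<i> * of_real t) * \<i>) * exp (\<i> * a * (of_real t + of_real pi)) +
          exp (\<i> * a * (of_real t + of_real pi)) * (\<i> * a) * G (exp (\<i> * of_real t)) = Cp (deriv G) a t - a * Cp G (a-1) t"
        unfolding Cp_def by (simp add: algebra_simps)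
    qed
    from has_vector_derivative_real_field[OF this] show ?thesis .
  qed
  have h1: "((\<lambda>t. Cp (deriv G) a t - a * Cp G (a-1) t) has_integral (K (of_real pi) - K (of_real (-pi)))) {-pi..pi}"
    by (rule fundamental_theorem_of_calculus[OF _ der]) simp
  have h2: "((\<lambda>t. Cp (deriv G) a t - a * Cp G (a-1) t) has_integral (Cc (deriv G) a - a * Cc G (a-1))) {-pi..pi}"
    by (intro has_integral_diff has_integral_mult_right Cp_has_integral cG cdG)
  have "K (of_real pi) = G (-1) * exp (2 * \<i> * of_real pi * a)"
    unfolding K_def by (simp add: algebra_simps)
  moreover have "K (of_real (-pi)) = G (-1)"
    unfolding K_def by (simp add: exp_minus)
  ultimately have "Cc (deriv G) a - a * Cc G (a-1) = G (-1) * exp (2 * \<i> * of_real pi * a) - G (-1)"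
    using has_integral_unique[OF h2 h1] by simp
  then show ?thesis by (simp add: algebra_simps)
qed

lemma hankel_formula:
  assumes G: "continuous_on UNIV G" and L: "(Lr G a \<longlongrightarrow> l) at_top"
  shows "hankel_integral G a = (1 - exp (2 * \<i> * of_real pi * a)) * l + Cc G a"
proof -
  define E where "E = exp (2 * \<i> * of_real pi * a)"
  have ev: "eventually (\<lambda>R. R > (1::real)) at_top" by (rule eventually_gt_at_top)
  have "((\<lambda>R. contour_integral (linepath (- of_real R) (-1)) (\<lambda>s. G s * (-s) powr a)) \<longlongrightarrow> l) at_top"
    by (rule Lim_transform_eventually[OF L]) (use ev in \<open>eventually_elim, simp add: ray_lower[OF G]\<close>)
  then have 1: "Lim at_top (\<lambda>R. contour_integral (linepath (- of_real R) (-1)) (\<lambda>s. G s * (-s) powr a)) = l"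
    by (intro tendsto_Lim) auto
  have "((\<lambda>R. - E * Lr G a R) \<longlongrightarrow> - E * l) at_top"
    by (intro tendsto_mult_left L)
  then have "((\<lambda>R. contour_integral (linepath (-1) (- of_real R)) (\<lambda>s. G s * (E * (-s) powr a))) \<longlongrightarrow> - E * l) at_top"
    by (rule Lim_transform_eventually) (use ev in \<open>eventually_elim, simp add: ray_upper[OF G]\<close>)
  then have 3: "Lim at_top (\<lambda>R. contour_integral (linepath (-1) (- of_real R)) (\<lambda>s. G s * (E * (-s) powr a))) = - E * l"
    by (intro tendsto_Lim) auto
  show ?thesis
    unfolding hankel_integral_def 1 circ_eq[OF G] E_def[symmetric] 3
    by (simp add: algebra_simps)
qed

definition good :: "(complex \<Rightarrow> complex) \<Rightarrow> bool" where
  "good G \<longleftrightarrow> G holomorphic_on UNIV \<and> (\<exists>c>0. ((\<lambda>R. norm (G (- of_real R)) * exp (c*R)) \<longlongrightarrow> 0) at_top)"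

lemma good_cont: "good G \<Longrightarrow> continuous_on UNIV G"
  unfolding good_def using holomorphic_on_imp_continuous_on by blast

lemma good_conv: "good G \<Longrightarrow> \<exists>l. (Lr G a \<longlongrightarrow> l) at_top"
  using conv_ray good_cont unfolding good_def by blast

lemma good_decay:
  assumes "good G"
  shows "((\<lambda>R. G (- of_real R) * of_real R powr a) \<longlongrightarrow> 0) at_top"
proof -
  obtain c where c: "c > 0" and lim: "((\<lambda>R. norm (G (- of_real R)) * exp (c*R)) \<longlongrightarrow> 0) at_top"
    using assms unfolding good_def by blast
  have "((\<lambda>R. (norm (G (- of_real R)) * exp (c*R)) * (R powr Re a * exp (-c*R))) \<longlongrightarrow> 0) at_top"
    by (rule tendsto_mult_zero[OF lim]) (use c in real_asymp)
  moreover have "eventually (\<lambda>R. (norm (G (- of_real R)) * exp (c*R)) * (R powr Re a * exp (-c*R))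
      = norm (G (- of_real R) * of_real R powr a)) at_top"
    using eventually_ge_at_top[of 1]
  proof eventually_elim
    case (elim R)
    have "exp (c*R) * exp (-c*R) = 1" by (simp flip: exp_add)
    then have "(norm (G (- of_real R)) * exp (c*R)) * (R powr Re a * exp (-c*R)) = norm (G (- of_real R)) * R powr Re a"
      by (metis (no_types, lifting) mult.assoc mult.commute mult.right_neutral)
    also have "\<dots> = norm (G (- of_real R) * of_real R powr a)"
      using elim by (simp add: norm_mult norm_powr_real_powr)
    finally show ?case .
  qed
  ultimately have "((\<lambda>R. norm (G (- of_real R) * of_real R powr a)) \<longlongrightarrow> 0) at_top"
    by (rule Lim_transform_eventually)
  then show ?thesis by (simp add: tendsto_norm_zero_iff)
qed

lemma E_m1: "exp (2 * \<i> * of_real pi * (a - 1)) = exp (2 * \<i> * of_real pi * a)"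
proof -
  have "exp (2 * \<i> * of_real pi * (a - 1)) = exp (2 * \<i> * of_real pi * a) * exp (- (2 * \<i> * of_real pi))"
    by (simp add: algebra_simps flip: exp_add)
  also have "exp (- (2 * \<i> * of_real pi)) = 1" by (simp add: exp_minus mult_ac)
  finally show ?thesis by simp
qed

lemma E_p1: "exp (2 * \<i> * of_real pi * (a + 1)) = exp (2 * \<i> * of_real pi * a)"
  using E_m1[of "a+1"] by simp

lemma hankel_deriv:
  assumes G: "good G"
  shows "hankel_integral (deriv G) a = a * hankel_integral G (a-1) \<and> (\<exists>l. (Lr (deriv G) a \<longlongrightarrow> l) at_top)"
proof -
  have Gh: "G holomorphic_on UNIV" using G unfolding good_def by blast
  have cG: "continuous_on UNIV G" using good_cont[OF G] .
  have cdG: "continuous_on UNIV (deriv G)" using Gh holomorphic_deriv holomorphic_on_imp_continuous_on by blast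
  obtain l' where l': "(Lr G (a-1) \<longlongrightarrow> l') at_top" using good_conv[OF G] by blast
  have "((\<lambda>R. G (-1) - G (- of_real R) * of_real R powr a + a * Lr G (a-1) R) \<longlongrightarrow> G (-1) - 0 + a * l') at_top"
    by (intro tendsto_intros good_decay[OF G] l')
  then have "((\<lambda>R. G (-1) - G (- of_real R) * of_real R powr a + a * Lr G (a-1) R) \<longlongrightarrow> G (-1) + a * l') at_top"
    by simp
  then have L: "(Lr (deriv G) a \<longlongrightarrow> G (-1) + a * l') at_top"
    by (rule Lim_transform_eventually) (use eventually_ge_at_top[of 1] in \<open>eventually_elim, simp add: Lr_ibp[OF Gh]\<close>)
  have "hankel_integral (deriv G) a = (1 - exp (2 * \<i> * of_real pi * a)) * (G (-1) + a * l') + Cc (deriv G) a"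
    by (rule hankel_formula[OF cdG L])
  also have "\<dots> = a * ((1 - exp (2 * \<i> * of_real pi * (a-1))) * l' + Cc G (a-1))"
    unfolding circ_ibp[OF Gh] E_m1 by (simp add: algebra_simps)
  also have "\<dots> = a * hankel_integral G (a-1)"
    by (simp add: hankel_formula[OF cG l'])
  finally show ?thesis using L by blast
qed

lemma Lr_lin:
  assumes "continuous_on UNIV G1" "continuous_on UNIV G2"
  shows "Lr (\<lambda>s. c * G1 s + d * G2 s) a R = c * Lr G1 a R + d * Lr G2 a R"
proof -
  have "((\<lambda>y. c * (G1 (- of_real y) * of_real y powr a) + d * (G2 (- of_real y) * of_real y powr a))
      has_integral c * Lr G1 a R + d * Lr G2 a R) {1..R}"
    by (intro has_integral_add has_integral_mult_right Lr_has_integral assms)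
  moreover have "((\<lambda>y. c * (G1 (- of_real y) * of_real y powr a) + d * (G2 (- of_real y) * of_real y powr a))
      has_integral Lr (\<lambda>s. c * G1 s + d * G2 s) a R) {1..R}"
    using Lr_has_integral[of "\<lambda>s. c * G1 s + d * G2 s" a R] assms
    by (simp add: algebra_simps continuous_intros)
  ultimately show ?thesis using has_integral_unique by blast
qed

lemma Cc_lin:
  assumes "continuous_on UNIV G1" "continuous_on UNIV G2"
  shows "Cc (\<lambda>s. c * G1 s + d * G2 s) a = c * Cc G1 a + d * Cc G2 a"
proof -
  have "((\<lambda>t. c * Cp G1 a t + d * Cp G2 a t) has_integral c * Cc G1 a + d * Cc G2 a) {-pi..pi}"
    by (intro has_integral_add has_integral_mult_right Cp_has_integral assms)
  moreover have "((\<lambda>t. c * Cp G1 a t + d * Cp G2 a t) has_integral Cc (\<lambda>s. c * G1 s + d * G2 s) a) {-pi..pi}"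
  proof -
    have eq: "(\<lambda>t. c * Cp G1 a t + d * Cp G2 a t) = Cp (\<lambda>s. c * G1 s + d * G2 s) a"
      by (simp add: fun_eq_iff Cp_def algebra_simps)
    show ?thesis unfolding eq by (intro Cp_has_integral continuous_intros assms)
  qed
  ultimately show ?thesis using has_integral_unique by blast
qed

lemma hankel_lin:
  assumes c1: "continuous_on UNIV G1" and c2: "continuous_on UNIV G2"
    and l1: "(Lr G1 a \<longlongrightarrow> l1) at_top" and l2: "(Lr G2 a \<longlongrightarrow> l2) at_top"
  shows "hankel_integral (\<lambda>s. c * G1 s + d * G2 s) a = c * hankel_integral G1 a + d * hankel_integral G2 a"
proof -
  have c3: "continuous_on UNIV (\<lambda>s. c * G1 s + d * G2 s)"
    by (intro continuous_intros c1 c2)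
  have that: "((\<lambda>R. c * Lr G1 a R + d * Lr G2 a R) \<longlongrightarrow> c * l1 + d * l2) at_top"
    by (intro tendsto_intros l1 l2)
  have l3: "(Lr (\<lambda>s. c * G1 s + d * G2 s) a \<longlongrightarrow> c * l1 + d * l2) at_top"
  proof -
    have "Lr (\<lambda>s. c * G1 s + d * G2 s) a = (\<lambda>R. c * Lr G1 a R + d * Lr G2 a R)"
      by (rule ext) (rule Lr_lin[OF c1 c2])
    then show ?thesis using that by simp
  qed
  show ?thesis
    unfolding hankel_formula[OF c3 l3] hankel_formula[OF c1 l1] hankel_formula[OF c2 l2] Cc_lin[OF c1 c2]
    by (simp add: algebra_simps)
qed

lemma hankel_shift:
  assumes c1: "continuous_on UNIV G" and l: "(Lr G (a+1) \<longlongrightarrow> l) at_top"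
  shows "hankel_integral (\<lambda>s. s * G s) a = - hankel_integral G (a+1)"
proof -
  have c3: "continuous_on UNIV (\<lambda>s. s * G s)"
    by (intro continuous_intros c1)
  have Lr_eq: "Lr (\<lambda>s. s * G s) a R = - Lr G (a+1) R" for R
  proof -
    have "Lr (\<lambda>s. s * G s) a R = integral {1..R} (\<lambda>y. - (G (- of_real y) * of_real y powr (a+1)))"
      unfolding Lr_def
    proof (rule integral_cong)
      fix y assume "y \<in> {1..R}"
      then have "(of_real y :: complex) \<noteq> 0" by auto
      then show "(- of_real y) * G (- of_real y) * of_real y powr a = - (G (- of_real y) * of_real y powr (a+1))"
        by (simp add: powr_add)
    qed
    also have "\<dots> = - Lr G (a+1) R" unfolding Lr_def by (rule integral_neg)
    finally show ?thesis .
  qed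
  have l3: "(Lr (\<lambda>s. s * G s) a \<longlongrightarrow> - l) at_top"
    unfolding Lr_eq by (intro tendsto_intros l)
  have Cc_eq: "Cc (\<lambda>s. s * G s) a = - Cc G (a+1)"
  proof -
    have "Cc (\<lambda>s. s * G s) a = integral {-pi..pi} (\<lambda>t. - Cp G (a+1) t)"
      unfolding Cc_def
    proof (rule integral_cong)
      fix t
      show "Cp (\<lambda>s. s * G s) a t = - Cp G (a+1) t"
        unfolding Cp_def exp_shift_p1 by (simp add: algebra_simps)
    qed
    also have "\<dots> = - Cc G (a+1)" unfolding Cc_def by (rule integral_neg)
    finally show ?thesis .
  qed
  show ?thesis
    unfolding hankel_formula[OF c3 l3] hankel_formula[OF c1 l] Cc_eq E_p1
    by (simp add: algebra_simps)
qed

lemma notInt_facts: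
  fixes x :: complex
  assumes "x \<notin> \<int>"
  shows "sin (of_real pi * x) \<noteq> 0" "x \<noteq> 0" "x + 1 \<noteq> 0"
    "- x - 1 \<notin> \<int>\<^sub>\<le>\<^sub>0" "- x \<notin> \<int>\<^sub>\<le>\<^sub>0"
proof -
  show "sin (of_real pi * x) \<noteq> 0"
  proof
    assume "sin (of_real pi * x) = 0"
    then obtain n :: int where n: "of_real pi * x = of_real (of_int n * pi)"
      by (auto simp: sin_eq_0)
    then have "x = of_int n" by (simp add: field_simps)
    then show False using assms by auto
  qed
  show "x \<noteq> 0" using assms by auto
  show "x + 1 \<noteq> 0"
  proof
    assume "x + 1 = 0" then have "x = -1" by (simp add: add_eq_0_iff2)
    then show False using assms by auto
  qed
  show "- x - 1 \<notin> \<int>\<^sub>\<le>\<^sub>0"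
  proof
    assume "- x - 1 \<in> \<int>\<^sub>\<le>\<^sub>0"
    then have "- x - 1 \<in> \<int>" using nonpos_Ints_Int by blast
    then have "- (- x - 1) - 1 \<in> \<int>" by (intro Ints_diff Ints_minus) auto
    then show False using assms by simp
  qed
  show "- x \<notin> \<int>\<^sub>\<le>\<^sub>0"
  proof
    assume "- x \<in> \<int>\<^sub>\<le>\<^sub>0"
    then have "- x \<in> \<int>" using nonpos_Ints_Int by blast
    then have "x \<in> \<int>" using Ints_minus[of "-x"] by simp
    then show False using assms by simp
  qed
qed

definition CC :: "complex \<Rightarrow> complex" where
  "CC x = exp (- \<i> * of_real pi * x) / (2 * \<i> * sin (of_real pi * x) * Gamma (- x))"

lemma frakN_CC: "frakN f x = CC x * hankel_integral (\<lambda>s. f s * exp s) (- x - 1)"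
  unfolding frakN_def CC_def ..

lemma sin_shift: fixes x :: complex shows "sin (of_real pi * (x + 1)) = - sin (of_real pi * x)"
  "sin (of_real pi * (x - 1)) = - sin (of_real pi * x)"
proof -
  have "sin (of_real pi :: complex) = 0" "cos (of_real pi :: complex) = -1"
    by (metis sin_of_real sin_pi of_real_0, metis cos_of_real cos_pi of_real_1 of_real_minus)
  then show "sin (of_real pi * (x + 1)) = - sin (of_real pi * x)"
    "sin (of_real pi * (x - 1)) = - sin (of_real pi * x)"
    by (simp_all add: distrib_left right_diff_distrib sin_add sin_diff)
qed

lemma exp_shift: fixes x :: complex shows "exp (- \<i> * of_real pi * (x + 1)) = - exp (- \<i> * of_real pi * x)"
  "exp (- \<i> * of_real pi * (x - 1)) = - exp (- \<i> * of_real pi * x)"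
proof -
  have "exp (- \<i> * of_real pi * (x + 1)) = exp (- \<i> * of_real pi * x) * exp (- (\<i> * of_real pi))"
    by (simp add: algebra_simps flip: exp_add)
  then show "exp (- \<i> * of_real pi * (x + 1)) = - exp (- \<i> * of_real pi * x)"
    by (simp add: exp_minus)
  have e: "- \<i> * of_real pi * (x - 1) = - \<i> * of_real pi * x + \<i> * of_real pi"
    by (simp add: algebra_simps)
  have "exp (- \<i> * of_real pi * (x - 1)) = exp (- \<i> * of_real pi * x) * exp (\<i> * of_real pi)"
    unfolding e by (simp only: exp_add)
  then show "exp (- \<i> * of_real pi * (x - 1)) = - exp (- \<i> * of_real pi * x)"
    by simp
qed

lemma CC_plus1:
  assumes "x \<notin> \<int>"
  shows "CC (x + 1) = (- x - 1) * CC x"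
proof -
  note nz = notInt_facts[OF assms]
  have g: "Gamma (- x) = (- x - 1) * Gamma (- x - 1)"
    using Gamma_plus1[OF nz(4)] by simp
  have g0: "Gamma (- x - 1) \<noteq> 0" by (rule Gamma_nonzero[OF nz(4)])
  have m: "- x - 1 \<noteq> 0" using nz(3) by (simp add: algebra_simps) (metis add.commute add_eq_0_iff2 minus_add_distrib nz(3))
  have "- (x + 1) = - x - 1" by simp
  have A: "CC (x + 1) = exp (- \<i> * of_real pi * x) / (2 * \<i> * sin (of_real pi * x) * Gamma (- x - 1))"
    unfolding CC_def sin_shift exp_shift \<open>- (x + 1) = - x - 1\<close>
    using nz(1) g0 by (simp add: field_simps)
  have B: "CC x = exp (- \<i> * of_real pi * x) / (2 * \<i> * sin (of_real pi * x) * ((- x - 1) * Gamma (- x - 1)))"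
    unfolding CC_def g ..
  show ?thesis unfolding A B
    using nz(1) g0 m by (simp add: divide_simps)
qed

lemma CC_minus1:
  assumes "x \<notin> \<int>"
  shows "x * CC (x - 1) = - CC x"
proof -
  note nz = notInt_facts[OF assms]
  have g: "Gamma (- x + 1) = (- x) * Gamma (- x)"
    using Gamma_plus1[OF nz(5)] by simp
  have g0: "Gamma (- x) \<noteq> 0" by (rule Gamma_nonzero[OF nz(5)])
  have "- (x - 1) = - x + 1" by simp
  show ?thesis
    unfolding CC_def sin_shift exp_shift g \<open>- (x - 1) = - x + 1\<close>
    using nz(1,2) g0 by (simp add: field_simps)
qed

lemma Od_holo: "f \<in> O_d \<Longrightarrow> f holomorphic_on UNIV"
  unfolding O_d_def by blast

lemma Od_good:
  assumes f: "f \<in> O_d"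
  shows "good (\<lambda>s. f s * exp s)"
proof -
  have fh: "f holomorphic_on UNIV" using Od_holo[OF f] .
  obtain m where m: "m < 1" and lim: "((\<lambda>x::real. norm (f (of_real x) * exp (of_real (m * x)))) \<longlongrightarrow> 0) at_bot"
    using f unfolding O_d_def by blast
  have lim2: "((\<lambda>R::real. norm (f (of_real (-R)) * exp (of_real (m * (-R))))) \<longlongrightarrow> 0) at_top"
    using filterlim_compose[OF lim filterlim_uminus_at_bot_at_top] by simp
  have "((\<lambda>R. norm (f (- of_real R) * exp (- of_real R)) * exp ((1 - m) * R)) \<longlongrightarrow> 0) at_top"
  proof (rule Lim_transform_eventually[OF lim2], rule always_eventually, rule allI)
    fix R :: real
    have e1: "norm (exp (of_real (m * (-R)) :: complex)) = exp (-(m*R))" by (simp add: norm_exp_eq_Re)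
    have e2: "norm (exp (- of_real R :: complex)) = exp (-R)" by (simp add: norm_exp_eq_Re)
    have e3: "exp (-R) * exp ((1-m)*R) = exp (-(m*R))" by (simp add: algebra_simps flip: exp_add)
    show "norm (f (of_real (-R)) * exp (of_real (m * (-R)))) = norm (f (- of_real R) * exp (- of_real R)) * exp ((1 - m) * R)"
      by (simp only: norm_mult e1 e2 mult.assoc e3 of_real_minus)
  qed
  moreover have "(\<lambda>s. f s * exp s) holomorphic_on UNIV"
    by (intro holomorphic_intros fh)
  ultimately show ?thesis unfolding good_def using m
    by (intro conjI exI[of _ "1 - m"]) auto
qed

lemma deriv_fexp:
  assumes "f holomorphic_on UNIV"
  shows "deriv (\<lambda>s. f s * exp s) z = deriv f z * exp z + f z * exp z"
proof -
  have "(f has_field_derivative deriv f z) (at z)"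
    using assms by (auto intro: holomorphic_derivI)
  then have "((\<lambda>s. f s * exp s) has_field_derivative deriv f z * exp z + f z * exp z) (at z)"
    by (auto intro!: derivative_eq_intros)
  then show ?thesis by (rule DERIV_imp_deriv)
qed

theorem mainTheorem10:
  shows "(\<forall>f\<in>O_d. \<forall>g\<in>O_d. \<forall>c d::complex.
            frakN (\<lambda>s. c * f s + d * g s) = (\<lambda>x. c * frakN f x + d * frakN g x))
       \<and> (\<forall>f\<in>O_d. \<forall>x::complex. x \<notin> \<int> \<longrightarrow>
            frakN (deriv f) x = frakN f (x + 1) - frakN f x)
       \<and> (\<forall>f\<in>O_d. \<forall>x::complex. x \<notin> \<int> \<longrightarrow>
            frakN (\<lambda>s. s * f s) x = x * frakN f (x - 1))"
proof (intro conjI ballI allI impI)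
  fix f g c d
  assume f: "f \<in> O_d" and g: "g \<in> O_d"
  show "frakN (\<lambda>s. c * f s + d * g s) = (\<lambda>x. c * frakN f x + d * frakN g x)"
  proof
    fix x
    define G1 where "G1 = (\<lambda>s. f s * exp s)"
    define G2 where "G2 = (\<lambda>s. g s * exp s)"
    have g1: "good G1" unfolding G1_def by (rule Od_good[OF f])
    have g2: "good G2" unfolding G2_def by (rule Od_good[OF g])
    obtain l1 where l1: "(Lr G1 (- x - 1) \<longlongrightarrow> l1) at_top" using good_conv[OF g1] by blast
    obtain l2 where l2: "(Lr G2 (- x - 1) \<longlongrightarrow> l2) at_top" using good_conv[OF g2] by blast
    have eq: "(\<lambda>s. (c * f s + d * g s) * exp s) = (\<lambda>s. c * G1 s + d * G2 s)"
      unfolding G1_def G2_def by (simp add: fun_eq_iff algebra_simps)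
    show "frakN (\<lambda>s. c * f s + d * g s) x = c * frakN f x + d * frakN g x"
      unfolding frakN_CC eq hankel_lin[OF good_cont[OF g1] good_cont[OF g2] l1 l2]
      unfolding G1_def G2_def by (simp add: algebra_simps)
  qed
next
  fix f and x :: complex
  assume f: "f \<in> O_d" and x: "x \<notin> \<int>"
  define G where "G = (\<lambda>s. f s * exp s)"
  have gG: "good G" unfolding G_def by (rule Od_good[OF f])
  have cG: "continuous_on UNIV G" by (rule good_cont[OF gG])
  have Gh: "G holomorphic_on UNIV" using gG unfolding good_def by blast
  have cdG: "continuous_on UNIV (deriv G)" using Gh holomorphic_deriv holomorphic_on_imp_continuous_on by blast
  define a where "a = - x - 1"
  obtain hd: "hankel_integral (deriv G) a = a * hankel_integral G (a-1)" and
    "\<exists>l. (Lr (deriv G) a \<longlongrightarrow> l) at_top" using hankel_deriv[OF gG] by blast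
  then obtain l1 where l1: "(Lr (deriv G) a \<longlongrightarrow> l1) at_top" by blast
  obtain l2 where l2: "(Lr G a \<longlongrightarrow> l2) at_top" using good_conv[OF gG] by blast
  have eq: "(\<lambda>s. deriv f s * exp s) = (\<lambda>s. 1 * deriv G s + (-1) * G s)"
    unfolding G_def using deriv_fexp[OF Od_holo[OF f]] by (simp add: fun_eq_iff)
  have H: "hankel_integral (\<lambda>s. deriv f s * exp s) a = a * hankel_integral G (a-1) - hankel_integral G a"
    unfolding eq hankel_lin[OF cdG cG l1 l2] hd by simp
  have a1: "- (x + 1) - 1 = a - 1" unfolding a_def by simp
  show "frakN (deriv f) x = frakN f (x + 1) - frakN f x"
    unfolding frakN_CC a_def[symmetric] H a1 CC_plus1[OF x]
    unfolding G_def a_def by (simp add: algebra_simps)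
next
  fix f and x :: complex
  assume f: "f \<in> O_d" and x: "x \<notin> \<int>"
  define G where "G = (\<lambda>s. f s * exp s)"
  have gG: "good G" unfolding G_def by (rule Od_good[OF f])
  have cG: "continuous_on UNIV G" by (rule good_cont[OF gG])
  obtain l where l: "(Lr G (- x - 1 + 1) \<longlongrightarrow> l) at_top" using good_conv[OF gG] by blast
  have eq: "(\<lambda>s. s * f s * exp s) = (\<lambda>s. s * G s)"
    unfolding G_def by (simp add: fun_eq_iff algebra_simps)
  have a1: "- (x - 1) - 1 = - x - 1 + 1" by simp
  have "frakN (\<lambda>s. s * f s) x = CC x * (- hankel_integral G (- x - 1 + 1))"
    unfolding frakN_CC eq hankel_shift[OF cG l] ..
  also have "\<dots> = x * CC (x - 1) * hankel_integral G (- x - 1 + 1)"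
    using CC_minus1[OF x] by simp
  also have "\<dots> = x * frakN f (x - 1)"
    unfolding frakN_CC a1 G_def by simp
  finally show "frakN (\<lambda>s. s * f s) x = x * frakN f (x - 1)" .
qed

end
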